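(* Let $X$ be an infinite-dimensional normed vector space over $\mathbb R$, with the metric induced by the norm. Then $h_\infty(X)=\infty$.
   Context: For a metric space $(X,d)$, $\delta>0$, $n\in\mathbb N$, $x_0\in X$: a $\delta$-path of length $n$ starting at $x_0$ is a sequence $(x_0,x_1,\dots,x_n)$ in $X$ with $d(x_i,x_{i+1})\le\delta$ for all $i$. Let $P(n,\delta,x_0)$ be the set of such $\delta$-paths, with distance $\max_i d(x_i,y_i)$ between $(x_i)$ and $(y_i)$. A set is $R$-separated if distinct elements are at distance $\ge R$. Let $s(n,R,\delta,x_0)$ be the supremum of cardinalities of $R$-separated subsets of $P(n,\delta,x_0)$. The coarse entropy of $X$ is $h_\infty(X)=\lim_{\delta\to\infty}\lim_{R\to\infty}\limsup_{n\to\infty}\frac1n\log s(n,R,\delta,x_0)\in[0,\infty]$ (independent of $x_0$); it equals the coarse entropy of the identity map of $X$ (and of any isometric self-embedding of $X$). *)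

theory Defs
  imports "HOL-Analysis.Analysis"
begin

text \<open>delta-paths of length n starting at x0, represented as functions on nat
  whose values after index n are normalised to x0 (so they correspond
  bijectively to tuples (x_0,...,x_n)).\<close>
definition dpaths :: "nat \<Rightarrow> real \<Rightarrow> 'a::metric_space \<Rightarrow> (nat \<Rightarrow> 'a) set" where
  "dpaths n \<delta> x0 = {p. p 0 = x0 \<and> (\<forall>i<n. dist (p i) (p (Suc i)) \<le> \<delta>) \<and> (\<forall>i>n. p i = x0)}"

definition pdist :: "nat \<Rightarrow> (nat \<Rightarrow> 'a::metric_space) \<Rightarrow> (nat \<Rightarrow> 'a) \<Rightarrow> real" where
  "pdist n p q = Max ((\<lambda>i. dist (p i) (q i)) ` {0..n})"

definition separated :: "nat \<Rightarrow> real \<Rightarrow> (nat \<Rightarrow> 'a::metric_space) set \<Rightarrow> bool" where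
  "separated n R S \<longleftrightarrow> (\<forall>p\<in>S. \<forall>q\<in>S. p \<noteq> q \<longrightarrow> pdist n p q \<ge> R)"

definition sep_num :: "nat \<Rightarrow> real \<Rightarrow> real \<Rightarrow> 'a::metric_space \<Rightarrow> ereal" where
  "sep_num n R \<delta> x0 = (SUP S \<in> {S. S \<subseteq> dpaths n \<delta> x0 \<and> separated n R S}. (if finite S then ereal (real (card S)) else \<infinity>))"

definition eln :: "ereal \<Rightarrow> ereal" where
  "eln s = (if s = \<infinity> then \<infinity> else ereal (ln (real_of_ereal s)))"

definition coarse_entropy :: "'a::metric_space \<Rightarrow> ereal" where
  "coarse_entropy x0 =
     Lim at_top (\<lambda>\<delta>::real. Lim at_top (\<lambda>R::real.
        limsup (\<lambda>n::nat. ereal (1 / real n) * eln (sep_num n R \<delta> x0))))"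

end

theory Submission
  imports Defs
begin

lemma closed_span_finite:
  fixes B :: "'a::real_normed_vector set"
  assumes "finite B"
  shows "closed (span B)"
  using assms
proof induct
  case empty
  then show ?case by simp
next
  case (insert a B)
  show ?case
  proof (cases "a \<in> span B")
    case True
    then show ?thesis using insert by (simp add: span_redundant)
  next
    case False
    define d where "d = infdist a (span B)"
    have "span B \<noteq> {}" using span_zero by blast
    then have dpos: "d > 0" unfolding d_def
      using infdist_pos_not_in_closed[OF insert(3)] False by blast
    have key: "\<bar>t\<bar> * d \<le> norm (t *\<^sub>R a + y)" if "y \<in> span B" for t y
    proof (cases "t = 0")
      case True then show ?thesis by simp
    next
      case False
      have "- ((1/t) *\<^sub>R y) \<in> span B" using that by (simp add: span_neg span_scale)
      then have "d \<le> dist a (- ((1/t) *\<^sub>R y))" unfolding d_def by (rule infdist_le)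
      also have "\<dots> = norm (a + (1/t) *\<^sub>R y)" by (simp add: dist_norm)
      finally have "\<bar>t\<bar> * d \<le> \<bar>t\<bar> * norm (a + (1/t) *\<^sub>R y)"
        by (simp add: mult_left_mono)
      also have "\<dots> = norm (t *\<^sub>R (a + (1/t) *\<^sub>R y))" by simp
      also have "t *\<^sub>R (a + (1/t) *\<^sub>R y) = t *\<^sub>R a + y"
        using False by (simp add: scaleR_add_right)
      finally show ?thesis .
    qed
    show ?thesis unfolding closed_sequential_limits
    proof (intro allI impI, elim conjE)
      fix z :: "nat \<Rightarrow> 'a" and l
      assume zin: "\<forall>n. z n \<in> span (insert a B)" and lim: "z \<longlonglongrightarrow> l"
      have "\<forall>n. \<exists>k. z n - k *\<^sub>R a \<in> span B"
        using zin unfolding span_insert by blast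
      then obtain t where t: "\<And>n. z n - t n *\<^sub>R a \<in> span B"
        by metis
      have tb: "\<bar>t m - t n\<bar> * d \<le> dist (z m) (z n)" for m n
      proof -
        have "(z m - t m *\<^sub>R a) - (z n - t n *\<^sub>R a) \<in> span B"
          using t by (simp add: span_diff)
        from key[OF this, of "t m - t n"]
        have "\<bar>t m - t n\<bar> * d \<le> norm ((t m - t n) *\<^sub>R a + ((z m - t m *\<^sub>R a) - (z n - t n *\<^sub>R a)))" .
        also have "(t m - t n) *\<^sub>R a + ((z m - t m *\<^sub>R a) - (z n - t n *\<^sub>R a)) = z m - z n"
          by (simp add: algebra_simps)
        finally show ?thesis by (simp add: dist_norm)
      qed
      have "Cauchy z" using lim by (rule LIMSEQ_imp_Cauchy)
      have "Cauchy t"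
      proof (rule metric_CauchyI)
        fix e :: real assume "e > 0"
        then have "e * d > 0" using dpos by simp
        with \<open>Cauchy z\<close> obtain M where M: "\<forall>m\<ge>M. \<forall>n\<ge>M. dist (z m) (z n) < e * d"
          unfolding Cauchy_def by blast
        show "\<exists>M. \<forall>m\<ge>M. \<forall>n\<ge>M. dist (t m) (t n) < e"
        proof (intro exI allI impI)
          fix m n assume "m \<ge> M" "n \<ge> M"
          then have "\<bar>t m - t n\<bar> * d < e * d" using M tb[of m n] by fastforce
          then show "dist (t m) (t n) < e" using dpos by (simp add: dist_real_def)
        qed
      qed
      then obtain T where T: "t \<longlonglongrightarrow> T" using Cauchy_convergent_iff convergent_def by blast
      have "(\<lambda>n. z n - t n *\<^sub>R a) \<longlonglongrightarrow> l - T *\<^sub>R a"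
        by (intro tendsto_intros lim T)
      then have "l - T *\<^sub>R a \<in> span B"
        by (rule closed_sequentially[OF insert(3) t])
      then show "l \<in> span (insert a B)" unfolding span_insert by blast
    qed
  qed
qed

lemma riesz:
  fixes B :: "'a::real_normed_vector set"
  assumes "finite B" "span B \<noteq> UNIV"
  shows "\<exists>v. norm v = 1 \<and> (\<forall>y\<in>span B. dist v y \<ge> 1/2)"
proof -
  obtain x where x: "x \<notin> span B" using assms(2) by blast
  define d where "d = infdist x (span B)"
  have ne: "span B \<noteq> {}" using span_zero by blast
  have dpos: "d > 0" unfolding d_def
    using infdist_pos_not_in_closed[OF closed_span_finite[OF assms(1)] ne x] .
  have "d < 2 * d" using dpos by simp
  then have "(INF a\<in>span B. dist x a) < 2 * d" using ne unfolding d_def infdist_def by simp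
  then obtain y0 where y0: "y0 \<in> span B" "dist x y0 < 2 * d"
    using ne by (subst (asm) cINF_less_iff) (auto intro: bdd_belowI2[where m=0])
  define r where "r = norm (x - y0)"
  have "x \<noteq> y0" using x y0 by auto
  then have rpos: "r > 0" unfolding r_def by simp
  have r2: "r < 2 * d" using y0 by (simp add: r_def dist_norm)
  define v where "v = (1/r) *\<^sub>R (x - y0)"
  have "norm v = 1" using rpos by (simp add: v_def r_def)
  moreover have "dist v y \<ge> 1/2" if "y \<in> span B" for y
  proof -
    have "y0 + r *\<^sub>R y \<in> span B" using that y0 by (simp add: span_add span_scale)
    then have "d \<le> dist x (y0 + r *\<^sub>R y)" unfolding d_def by (rule infdist_le)
    also have "\<dots> = norm (r *\<^sub>R (v - y))"
      using rpos by (simp add: v_def dist_norm algebra_simps)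
    also have "\<dots> = r * dist v y" using rpos by (simp add: dist_norm)
    finally have "d \<le> r * dist v y" .
    then have "r * (1/2) \<le> r * dist v y" using r2 by simp
    then show ?thesis using rpos by simp
  qed
  ultimately show ?thesis by blast
qed

lemma many_separated:
  fixes dummy :: "'a::real_normed_vector"
  assumes "\<not> (\<exists>B::'a set. finite B \<and> span B = UNIV)"
  shows "\<exists>S::'a set. finite S \<and> card S = N \<and> (\<forall>u\<in>S. norm u = 1) \<and>
           (\<forall>u\<in>S. \<forall>w\<in>S. u \<noteq> w \<longrightarrow> dist u w \<ge> 1/2)"
proof (induction N)
  case 0
  then show ?case by (intro exI[of _ "{}"]) auto
next
  case (Suc N)
  from Suc.IH obtain S :: "'a set" where S: "finite S" "card S = N" "\<forall>u\<in>S. norm u = 1"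
    "\<forall>u\<in>S. \<forall>w\<in>S. u \<noteq> w \<longrightarrow> dist u w \<ge> 1/2" by (elim exE conjE)
  have "span S \<noteq> UNIV" using assms S(1) by blast
  from riesz[OF S(1) this] obtain v where v: "norm v = 1" "\<forall>y\<in>span S. dist v y \<ge> 1/2"
    by blast
  have "v \<notin> S"
  proof
    assume "v \<in> S"
    then have "v \<in> span S" by (rule span_base)
    then have "1/2 \<le> dist v v" using v(2) by blast
    then show False by simp
  qed
  show ?case
  proof (intro exI[of _ "insert v S"] conjI)
    show "finite (insert v S)" using S by simp
    show "card (insert v S) = Suc N" using S \<open>v \<notin> S\<close> by simp
    show "\<forall>u\<in>insert v S. norm u = 1" using S v by simp
    show "\<forall>u\<in>insert v S. \<forall>w\<in>insert v S. u \<noteq> w \<longrightarrow> 1/2 \<le> dist u w"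
    proof (intro ballI impI)
      fix u w assume u: "u \<in> insert v S" and w: "w \<in> insert v S" and uw: "u \<noteq> w"
      have vs: "1/2 \<le> dist v x" if "x \<in> S" for x
        using v(2) span_base[OF that] by blast
      show "1/2 \<le> dist u w"
      proof (cases "u = v")
        case True
        then have "w \<in> S" using w uw by auto
        then show ?thesis using vs True by simp
      next
        case False
        then have uS: "u \<in> S" using u by auto
        show ?thesis
        proof (cases "w = v")
          case True
          then show ?thesis using vs[OF uS] by (simp add: dist_commute)
        next
          case False
          then have "w \<in> S" using w by auto
          then show ?thesis using S(4) uS uw by blast
        qed
      qed
    qed
  qed
qed


lemma ereal_all_nat_le:
  fixes x :: ereal
  assumes "\<And>N::nat. ereal (real N) \<le> x"
  shows "x = \<infinity>"
proof (cases x)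
  case (real r)
  have "ereal (real (nat \<lceil>r\<rceil> + 1)) \<le> x" by (rule assms)
  then have "real (nat \<lceil>r\<rceil> + 1) \<le> r" using real by simp
  moreover have "r < real (nat \<lceil>r\<rceil> + 1)"
    by (smt (verit) of_nat_1 of_nat_add real_nat_ceiling_ge)
  ultimately show ?thesis by simp
next
  case PInf then show ?thesis by simp
next
  case MInf
  have "ereal (real 0) \<le> x" by (rule assms)
  then show ?thesis using MInf by simp
qed

lemma sep_num_infinite:
  fixes x0 :: "'a::real_normed_vector"
  assumes inf: "\<not> (\<exists>B::'a set. finite B \<and> span B = UNIV)"
    and dpos: "\<delta> > 0"
    and nm: "n \<ge> nat \<lceil>2 * \<bar>R\<bar> / \<delta>\<rceil> + 1"
  shows "sep_num n R \<delta> x0 = \<infinity>"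
proof (rule ereal_all_nat_le)
  fix N :: nat
  define m where "m = nat \<lceil>2 * \<bar>R\<bar> / \<delta>\<rceil> + 1"
  have mn: "m \<le> n" using nm m_def by simp
  have "2 * \<bar>R\<bar> / \<delta> \<le> real (nat \<lceil>2 * \<bar>R\<bar> / \<delta>\<rceil>)"
    by (rule real_nat_ceiling_ge)
  then have "2 * \<bar>R\<bar> / \<delta> \<le> real m" unfolding m_def by simp
  then have "2 * \<bar>R\<bar> \<le> real m * \<delta>" using dpos by (simp add: divide_le_eq)
  then have Rm: "R \<le> real m * \<delta> / 2" by linarith
  have "real m > 0" unfolding m_def by simp
  then have mpos: "real m * \<delta> > 0" using dpos by simp
  have "\<exists>S::'a set. finite S \<and> card S = N \<and> (\<forall>u\<in>S. norm u = 1) \<and>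
           (\<forall>u\<in>S. \<forall>w\<in>S. u \<noteq> w \<longrightarrow> dist u w \<ge> 1/2)"
    by (rule many_separated[OF inf])
  then obtain S :: "'a set" where S: "finite S" "card S = N" "\<forall>u\<in>S. norm u = 1"
    "\<forall>u\<in>S. \<forall>w\<in>S. u \<noteq> w \<longrightarrow> dist u w \<ge> 1/2"
    by (elim exE conjE) (rule that)
  define P where "P u = (\<lambda>i. if i \<le> n then x0 + (real (min i m) * \<delta>) *\<^sub>R u else x0)" for u :: 'a
  have Pm: "P u m = x0 + (real m * \<delta>) *\<^sub>R u" for u using mn by (simp add: P_def)
  have injP: "inj_on P S"
  proof (rule inj_onI)
    fix u w assume "u \<in> S" "w \<in> S" "P u = P w"
    then have "P u m = P w m" by simp
    then have "(real m * \<delta>) *\<^sub>R u = (real m * \<delta>) *\<^sub>R w" by (simp add: Pm)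
    then show "u = w" using mpos by auto
  qed
  have sub: "P ` S \<subseteq> dpaths n \<delta> x0"
  proof
    fix p assume "p \<in> P ` S"
    then obtain u where u: "u \<in> S" "p = P u" by blast
    have "dist (p i) (p (Suc i)) \<le> \<delta>" if "i < n" for i
    proof -
      have "dist (p i) (p (Suc i)) = norm (p (Suc i) - p i)"
        by (simp add: dist_norm norm_minus_commute)
      also have "p (Suc i) - p i = (real (min (Suc i) m) * \<delta> - real (min i m) * \<delta>) *\<^sub>R u"
        using that u by (simp add: P_def scaleR_diff_left)
      finally have "dist (p i) (p (Suc i)) = norm ((real (min (Suc i) m) * \<delta> - real (min i m) * \<delta>) *\<^sub>R u)" .
      also have "\<dots> = \<bar>real (min (Suc i) m) * \<delta> - real (min i m) * \<delta>\<bar>"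
        using u S(3) by (simp only: norm_scaleR) simp
      also have "\<dots> \<le> \<delta>"
      proof (cases "i < m")
        case True
        then have "min (Suc i) m = Suc i" "min i m = i" by auto
        then show ?thesis using dpos by (simp add: algebra_simps)
      next
        case False
        then have "min (Suc i) m = m" "min i m = m" by auto
        then show ?thesis using dpos by simp
      qed
      finally show ?thesis .
    qed
    moreover have "p 0 = x0" by (simp add: u P_def)
    moreover have "\<forall>i>n. p i = x0" by (simp add: u P_def)
    ultimately show "p \<in> dpaths n \<delta> x0" unfolding dpaths_def by blast
  qed
  have sep: "separated n R (P ` S)"
    unfolding separated_def
  proof (intro ballI impI)
    fix p q assume "p \<in> P ` S" "q \<in> P ` S" "p \<noteq> q"
    then obtain u w where uw: "u \<in> S" "w \<in> S" "p = P u" "q = P w" "u \<noteq> w" by blast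
    have "R \<le> real m * \<delta> * (1/2)" using Rm by simp
    also have "\<dots> \<le> real m * \<delta> * dist u w"
      using S(4) uw mpos by (intro mult_left_mono) auto
    also have "\<dots> = dist (p m) (q m)"
    proof -
      have "dist (p m) (q m) = norm ((real m * \<delta>) *\<^sub>R u - (real m * \<delta>) *\<^sub>R w)"
        using uw by (simp add: Pm dist_norm)
      also have "\<dots> = norm ((real m * \<delta>) *\<^sub>R (u - w))" by (simp only: scaleR_diff_right)
      also have "\<dots> = real m * \<delta> * dist u w" using mpos by (simp add: dist_norm)
      finally show ?thesis by simp
    qed
    also have "\<dots> \<le> pdist n p q" unfolding pdist_def
      using mn by (intro Max_ge) auto
    finally show "R \<le> pdist n p q" .
  qed
  have "ereal (real N) = (if finite (P ` S) then ereal (real (card (P ` S))) else \<infinity>)"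
    using S injP by (simp add: card_image)
  also have "\<dots> \<le> sep_num n R \<delta> x0" unfolding sep_num_def
    using sub sep by (intro SUP_upper) auto
  finally show "ereal (real N) \<le> sep_num n R \<delta> x0" .
qed

theorem mainTheorem2:
  fixes x0 :: "'a::real_normed_vector"
  assumes "\<not> (\<exists>B::'a set. finite B \<and> span B = UNIV)"
  shows "coarse_entropy x0 = \<infinity>"
proof -
  have ls: "limsup (\<lambda>n::nat. ereal (1 / real n) * eln (sep_num n R \<delta> x0)) = \<infinity>"
    if "\<delta> > 0" for \<delta> R :: real
  proof -
    have "eventually (\<lambda>n::nat. ereal (1 / real n) * eln (sep_num n R \<delta> x0) = \<infinity>) sequentially"
      using eventually_ge_at_top[of "nat \<lceil>2 * \<bar>R\<bar> / \<delta>\<rceil> + 1"]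
    proof eventually_elim
      case (elim n)
      then have "n > 0" by simp
      then show ?case using sep_num_infinite[OF assms that elim]
        by (simp add: eln_def)
    qed
    then have "limsup (\<lambda>n::nat. ereal (1 / real n) * eln (sep_num n R \<delta> x0)) = limsup (\<lambda>n::nat. \<infinity>::ereal)"
      by (rule Limsup_eq)
    then show ?thesis by (simp add: Limsup_const)
  qed
  have inner: "Lim at_top (\<lambda>R::real. limsup (\<lambda>n::nat. ereal (1 / real n) * eln (sep_num n R \<delta> x0))) = \<infinity>"
    if "\<delta> > 0" for \<delta> :: real
    using ls[OF that] by (simp add: tendsto_Lim[OF trivial_limit_at_top_linorder])
  have "((\<lambda>\<delta>::real. Lim at_top (\<lambda>R::real. limsup (\<lambda>n::nat. ereal (1 / real n) * eln (sep_num n R \<delta> x0)))) \<longlongrightarrow> \<infinity>) at_top"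
    by (rule tendsto_eventually, rule eventually_mono[OF eventually_gt_at_top[of "0::real"]], rule inner)
  then show ?thesis unfolding coarse_entropy_def
    by (rule tendsto_Lim[OF trivial_limit_at_top_linorder])
qed

end
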